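(* Let $m,t\in\mathbb{N}$ with $m\le t$. For every tree $T$ on $t$ vertices there exist subtrees $S_0,S_1,\dots,S_\ell$ of $T$ whose edge sets partition $E(T)$, such that $|S_0|=m$ and $\ell\le \log_{3/2} t$. Moreover $|V(S_0)\cap V(S_j)|=1$ for every $j\in[\ell]$.
   Context: $|S|$ denotes the number of vertices of $S$; $[\ell]=\{1,\dots,\ell\}$. *)

theory Defs
  imports Complex_Main
begin

definition is_graph :: "'a set \<Rightarrow> 'a set set \<Rightarrow> bool" where
  "is_graph V E \<longleftrightarrow> finite V \<and>
     (\<forall>e\<in>E. \<exists>u v. u \<noteq> v \<and> e = {u, v} \<and> u \<in> V \<and> v \<in> V)"

definition adj :: "'a set set \<Rightarrow> 'a \<Rightarrow> 'a \<Rightarrow> bool" where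
  "adj E u v \<longleftrightarrow> u \<noteq> v \<and> {u, v} \<in> E"

definition graph_connected :: "'a set \<Rightarrow> 'a set set \<Rightarrow> bool" where
  "graph_connected V E \<longleftrightarrow>
     (\<forall>u\<in>V. \<forall>v\<in>V. (u, v) \<in> {(x, y). adj E x y}\<^sup>*)"

definition is_cycle :: "'a set set \<Rightarrow> 'a list \<Rightarrow> bool" where
  "is_cycle E xs \<longleftrightarrow> length xs \<ge> 3 \<and> distinct xs \<and>
     (\<forall>i. Suc i < length xs \<longrightarrow> adj E (xs ! i) (xs ! Suc i)) \<and>
     adj E (last xs) (hd xs)"

definition is_tree :: "'a set \<Rightarrow> 'a set set \<Rightarrow> bool" where
  "is_tree V E \<longleftrightarrow> is_graph V E \<and> V \<noteq> {} \<and> graph_connected V E \<and>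
     \<not> (\<exists>xs. is_cycle E xs)"

definition is_subtree :: "'a set \<times> 'a set set \<Rightarrow> 'a set \<Rightarrow> 'a set set \<Rightarrow> bool" where
  "is_subtree S V E \<longleftrightarrow> fst S \<subseteq> V \<and> snd S \<subseteq> E \<and> is_tree (fst S) (snd S)"

end

theory Submission imports Defs "HOL-Library.Transitive_Closure_Table"
begin

definition reach :: "'a set set \<Rightarrow> ('a \<times> 'a) set" where
  "reach F = {(x, y). adj F x y}\<^sup>*"

definition gwf :: "'a set \<Rightarrow> 'a set set \<Rightarrow> bool" where
  "gwf W F \<longleftrightarrow> (\<forall>e\<in>F. \<exists>u v. u \<noteq> v \<and> e = {u, v} \<and> u \<in> W \<and> v \<in> W)"

lemma adj_sym: "adj F u v \<Longrightarrow> adj F v u"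
  by (auto simp: adj_def insert_commute)

lemma reach_sym: "(u, v) \<in> reach F \<Longrightarrow> (v, u) \<in> reach F"
proof -
  have "sym {(x, y). adj F x y}" by (auto simp: sym_def intro: adj_sym)
  then have "sym ({(x, y). adj F x y}\<^sup>*)" by (rule sym_rtrancl)
  then show "(u, v) \<in> reach F \<Longrightarrow> (v, u) \<in> reach F" unfolding reach_def by (auto dest: symD)
qed

lemma reach_mono: "F \<subseteq> F' \<Longrightarrow> (u, v) \<in> reach F \<Longrightarrow> (u, v) \<in> reach F'"
  unfolding reach_def
  by (rule set_mp[OF rtrancl_mono]) (auto simp: adj_def)

lemma reach_trans: "(u, v) \<in> reach F \<Longrightarrow> (v, w) \<in> reach F \<Longrightarrow> (u, w) \<in> reach F"
  unfolding reach_def by simp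

lemma reach_refl: "(u, u) \<in> reach F"
  unfolding reach_def by simp

lemma reach_step: "(u, v) \<in> reach F \<Longrightarrow> adj F v w \<Longrightarrow> (u, w) \<in> reach F"
  unfolding reach_def by (simp add: rtrancl.rtrancl_into_rtrancl)

lemma reach_edge: "adj F v w \<Longrightarrow> (v, w) \<in> reach F"
  using reach_step[OF reach_refl] .

lemma reach_closed:
  assumes "(u, w) \<in> reach F" "u \<in> W" "gwf W F"
  shows "w \<in> W"
  using assms(1) unfolding reach_def
proof (induction rule: rtrancl_induct)
  case base then show ?case using assms(2) .
next
  case (step y z)
  then have "{y, z} \<in> F" "y \<noteq> z" by (auto simp: adj_def)
  with assms(3) obtain a b where "{y, z} = {a, b}" "a \<in> W" "b \<in> W" unfolding gwf_def by blast
  then show ?case by (auto simp: doubleton_eq_iff)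
qed

lemma connected_reach: "graph_connected W F \<longleftrightarrow> (\<forall>u\<in>W. \<forall>v\<in>W. (u, v) \<in> reach F)"
  unfolding graph_connected_def reach_def by simp

lemma cycle_mono: "is_cycle F xs \<Longrightarrow> F \<subseteq> E \<Longrightarrow> is_cycle E xs"
  unfolding is_cycle_def adj_def by auto

lemma connected_union:
  assumes "graph_connected W1 F1" "graph_connected W2 F2" "x \<in> W1" "x \<in> W2"
  shows "graph_connected (W1 \<union> W2) (F1 \<union> F2)"
proof -
  have r: "(u, x) \<in> reach (F1 \<union> F2)" if "u \<in> W1 \<union> W2" for u
  proof -
    from that show ?thesis
    proof
      assume "u \<in> W1" then have "(u, x) \<in> reach F1" using assms by (simp add: connected_reach)
      then show ?thesis by (rule reach_mono[rotated]) auto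
    next
      assume "u \<in> W2" then have "(u, x) \<in> reach F2" using assms by (simp add: connected_reach)
      then show ?thesis by (rule reach_mono[rotated]) auto
    qed
  qed
  show ?thesis unfolding connected_reach
  proof (intro ballI)
    fix u v assume "u \<in> W1 \<union> W2" "v \<in> W1 \<union> W2"
    then have "(u, x) \<in> reach (F1 \<union> F2)" "(v, x) \<in> reach (F1 \<union> F2)"
      using r by auto
    then have "(u, x) \<in> reach (F1 \<union> F2)" "(x, v) \<in> reach (F1 \<union> F2)"
      using reach_sym by auto
    then show "(u, v) \<in> reach (F1 \<union> F2)" by (rule reach_trans)
  qed
qed

lemma gwf_mono: "gwf W F \<Longrightarrow> W \<subseteq> W' \<Longrightarrow> gwf W' F"
  unfolding gwf_def by (meson subsetD)

lemma gwf_Un: "gwf W (F1 \<union> F2) \<longleftrightarrow> gwf W F1 \<and> gwf W F2"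
  unfolding gwf_def by blast

lemma is_subtree_gwf: "is_subtree (W, F) V E \<Longrightarrow> gwf W F"
  unfolding is_subtree_def is_tree_def is_graph_def gwf_def by auto

lemma is_subtree_conn: "is_subtree (W, F) V E \<Longrightarrow> graph_connected W F"
  unfolding is_subtree_def is_tree_def by auto

lemma is_subtree_sub: "is_subtree (W, F) V E \<Longrightarrow> W \<subseteq> V \<and> F \<subseteq> E \<and> W \<noteq> {}"
  unfolding is_subtree_def is_tree_def by auto

lemma is_subtree_fin: "is_subtree (W, F) V E \<Longrightarrow> finite W"
  unfolding is_subtree_def is_tree_def is_graph_def by auto

lemma log_mono32: "1 \<le> a \<Longrightarrow> a \<le> b \<Longrightarrow> log (3/2) (real a) \<le> log (3/2) (real b)"
  by (subst log_le_cancel_iff) auto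
lemma log_step32:
  assumes "1 \<le> a" "3 * a \<le> 2 * t"
  shows "log (3/2) (real a) + 1 \<le> log (3/2) (real t)"
proof -
  have "log (3/2) (real a * (3/2)) = log (3/2) (real a) + log (3/2) (3/2)"
    using assms(1) by (intro log_mult_pos) auto
  then have "log (3/2) (real a) + 1 = log (3/2) (real a * (3/2))" by simp
  also have "\<dots> \<le> log (3/2) (real t)"
    using assms by (subst log_le_cancel_iff) auto
  finally show ?thesis .
qed
lemma log_ge1: "2 \<le> t \<Longrightarrow> 1 \<le> log (3/2) (real t)"
  using log_step32[of 1 t] by simp
lemma log_ge0: "1 \<le> t \<Longrightarrow> 0 \<le> log (3/2) (real t)"
  using log_mono32[of 1 t] by simp

definition decomp :: "'a set \<Rightarrow> 'a set set \<Rightarrow> 'a set \<Rightarrow> 'a set set \<Rightarrow> 'a \<Rightarrow> nat \<Rightarrow> nat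
    \<Rightarrow> (nat \<Rightarrow> 'a set \<times> 'a set set) \<Rightarrow> bool" where
  "decomp V E W F x m l S \<longleftrightarrow>
     (\<forall>j\<le>l. is_subtree (S j) V E \<and> fst (S j) \<subseteq> W) \<and>
     (\<forall>j\<in>{1..l}. snd (S j) \<noteq> {}) \<and>
     (\<forall>i\<le>l. \<forall>j\<le>l. i \<noteq> j \<longrightarrow> snd (S i) \<inter> snd (S j) = {}) \<and>
     (\<Union>j\<le>l. snd (S j)) = F \<and>
     card (fst (S 0)) = m \<and> x \<in> fst (S 0) \<and>
     (\<forall>j\<in>{1..l}. card (fst (S 0) \<inter> fst (S j)) = 1)"

lemma combine1:
  assumes d: "decomp V E W1 F1 x m l S" and s2: "is_subtree (W2, F2) V E"
    and i: "W1 \<inter> W2 = {x}" and f: "F1 \<inter> F2 = {}" and ne: "F2 \<noteq> {}"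
  shows "decomp V E (W1 \<union> W2) (F1 \<union> F2) x m (Suc l) (S(Suc l := (W2, F2)))"
proof -
  let ?S = "S(Suc l := (W2, F2))"
  have d1: "\<And>j. j \<le> l \<Longrightarrow> is_subtree (S j) V E \<and> fst (S j) \<subseteq> W1"
    and d2: "\<And>j. j \<in> {1..l} \<Longrightarrow> snd (S j) \<noteq> {}"
    and d3: "\<And>i j. i \<le> l \<Longrightarrow> j \<le> l \<Longrightarrow> i \<noteq> j \<Longrightarrow> snd (S i) \<inter> snd (S j) = {}"
    and d4: "(\<Union>j\<le>l. snd (S j)) = F1"
    and d5: "card (fst (S 0)) = m" "x \<in> fst (S 0)"
    and d6: "\<And>j. j \<in> {1..l} \<Longrightarrow> card (fst (S 0) \<inter> fst (S j)) = 1"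
    using d unfolding decomp_def by auto
  have sF: "snd (S j) \<subseteq> F1" if "j \<le> l" for j using d4 that by auto
  have eq: "?S j = S j" if "j \<le> l" for j using that by simp
  have S0: "fst (S 0) \<subseteq> W1" using d1[of 0] by simp
  have U: "(\<Union>j\<le>Suc l. snd (?S j)) = F1 \<union> F2"
  proof -
    have "(\<Union>j\<le>Suc l. snd (?S j)) = F2 \<union> (\<Union>j\<le>l. snd (?S j))"
      by (simp add: atMost_Suc)
    also have "(\<Union>j\<le>l. snd (?S j)) = (\<Union>j\<le>l. snd (S j))"
      by (rule SUP_cong) (auto simp: eq)
    finally show ?thesis using d4 by auto
  qed
  have I: "fst (S 0) \<inter> W2 = {x}" using S0 i d5(2) by auto
  show ?thesis
    unfolding decomp_def
  proof (intro conjI ballI allI impI)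
    fix j assume "j \<le> Suc l"
    then consider "j \<le> l" | "j = Suc l" by linarith
    then show "is_subtree (?S j) V E"
      by cases (use d1 s2 in auto)
  next
    fix j assume "j \<le> Suc l"
    then consider "j \<le> l" | "j = Suc l" by linarith
    then show "fst (?S j) \<subseteq> W1 \<union> W2"
      by cases (use d1 s2 in auto)
  next
    fix j assume "j \<in> {1..Suc l}"
    then consider "j \<in> {1..l}" | "j = Suc l" by fastforce
    then show "snd (?S j) \<noteq> {}" by cases (use d2 ne in auto)
  next
    fix j assume "j \<in> {1..Suc l}"
    then consider "j \<in> {1..l}" | "j = Suc l" by fastforce
    then show "card (fst (?S 0) \<inter> fst (?S j)) = 1" by cases (use d6 I in auto)
  next
    fix i j assume ij: "i \<le> Suc l" "j \<le> Suc l" "i \<noteq> j"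
    consider "i \<le> l" "j \<le> l" | "i = Suc l" "j \<le> l" | "i \<le> l" "j = Suc l" using ij by linarith
    then show "snd (?S i) \<inter> snd (?S j) = {}"
    proof cases
      case 1 then show ?thesis using d3 ij by simp
    next
      case 2 then show ?thesis using sF[of j] f by auto
    next
      case 3 then show ?thesis using sF[of i] f by auto
    qed
  qed (use U d5 in auto)
qed

context
  fixes V :: "'a set" and E :: "'a set set"
  assumes tr: "is_tree V E"
begin

lemma sub_intro:
  assumes "W \<subseteq> V" "F \<subseteq> E" "W \<noteq> {}" "gwf W F" "graph_connected W F"
  shows "is_subtree (W, F) V E"
proof -
  have "finite V" using tr unfolding is_tree_def is_graph_def by auto
  then have "finite W" using assms(1) finite_subset by auto
  moreover have "\<not> (\<exists>xs. is_cycle F xs)"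
    using tr assms(2) cycle_mono unfolding is_tree_def by blast
  ultimately show ?thesis using assms unfolding is_subtree_def is_tree_def is_graph_def gwf_def by auto
qed

lemma sub_union:
  assumes "is_subtree (W1, F1) V E" "is_subtree (W2, F2) V E" "x \<in> W1" "x \<in> W2"
  shows "is_subtree (W1 \<union> W2, F1 \<union> F2) V E"
proof (rule sub_intro)
  show "graph_connected (W1 \<union> W2) (F1 \<union> F2)"
    using connected_union[OF is_subtree_conn[OF assms(1)] is_subtree_conn[OF assms(2)] assms(3,4)] .
  show "gwf (W1 \<union> W2) (F1 \<union> F2)"
    using gwf_mono[OF is_subtree_gwf[OF assms(1)], of "W1 \<union> W2"] gwf_mono[OF is_subtree_gwf[OF assms(2)], of "W1 \<union> W2"]
    by (simp add: gwf_Un)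
  show "W1 \<union> W2 \<subseteq> V" "F1 \<union> F2 \<subseteq> E" "W1 \<union> W2 \<noteq> {}"
    using is_subtree_sub[OF assms(1)] is_subtree_sub[OF assms(2)] by auto
qed

lemma sub_single: "x \<in> V \<Longrightarrow> is_subtree ({x}, {}) V E"
  by (rule sub_intro) (auto simp: gwf_def connected_reach reach_refl)

lemma sub_edge:
  assumes "{x, v} \<in> E" "x \<noteq> v"
  shows "is_subtree ({x, v}, {{x, v}}) V E"
proof (rule sub_intro)
  have "\<forall>e\<in>E. \<exists>u v. u \<noteq> v \<and> e = {u, v} \<and> u \<in> V \<and> v \<in> V"
    using tr unfolding is_tree_def is_graph_def by auto
  then obtain a b where "{x, v} = {a, b}" "a \<in> V" "b \<in> V" using assms(1) by metis
  then show "{x, v} \<subseteq> V" by simp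
  have "adj {{x, v}} x v" using assms by (simp add: adj_def)
  then have "(x, v) \<in> reach {{x, v}}" by (rule reach_edge)
  then have "(v, x) \<in> reach {{x, v}}" by (rule reach_sym)
  show "graph_connected {x, v} {{x, v}}" unfolding connected_reach
    using \<open>(x, v) \<in> reach {{x, v}}\<close> \<open>(v, x) \<in> reach {{x, v}}\<close> reach_refl by auto
  show "{{x, v}} \<subseteq> E" "{x, v} \<noteq> {}" using assms by auto
  show "gwf {x, v} {{x, v}}" unfolding gwf_def using assms by blast
qed


lemma comp_subtree:
  assumes "gwf W G" "W \<subseteq> V" "G \<subseteq> E" "r \<in> W"
  shows "is_subtree ({w. (r, w) \<in> reach G}, {f \<in> G. f \<subseteq> {w. (r, w) \<in> reach G}}) V E"
    (is "is_subtree (?C, ?FC) V E")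
proof (rule sub_intro)
  have CW: "?C \<subseteq> W"
  proof
    fix w assume "w \<in> ?C"
    then have "(r, w) \<in> reach G" by simp
    from reach_closed[OF this assms(4,1)] show "w \<in> W" .
  qed
  then show "?C \<subseteq> V" using assms(2) by blast
  show "?FC \<subseteq> E" using assms(3) by blast
  have "r \<in> ?C" by (simp add: reach_refl)
  then show "?C \<noteq> {}" by blast
  show "gwf ?C ?FC"
    unfolding gwf_def
  proof
    fix f assume f: "f \<in> ?FC"
    then have "f \<in> G" by simp
    then obtain a b where ab: "a \<noteq> b" "f = {a, b}" using assms(1) unfolding gwf_def by meson
    have "f \<subseteq> ?C" using f by simp
    then have "a \<in> ?C" "b \<in> ?C" using ab by auto
    with ab show "\<exists>a b. a \<noteq> b \<and> f = {a, b} \<and> a \<in> ?C \<and> b \<in> ?C" by blast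
  qed
  have rr: "(r, w) \<in> reach ?FC" if "(r, w) \<in> reach G" for w
  proof -
    from that have "(r, w) \<in> {(a, b). adj G a b}\<^sup>*" by (simp add: reach_def)
    then show ?thesis
  proof (induction rule: rtrancl_induct)
    case base then show ?case by (rule reach_refl)
  next
    case (step y z)
    then have yC: "y \<in> ?C" by (simp add: reach_def)
    have zC: "z \<in> ?C" using step(1,2) by (simp add: reach_def rtrancl.rtrancl_into_rtrancl)
    have "adj G y z" using step(2) by simp
    then have "adj ?FC y z" using yC zC by (auto simp: adj_def)
    then show ?case using step(3) by (rule reach_step[rotated])
  qed
  qed
  show "graph_connected ?C ?FC" unfolding connected_reach
  proof (intro ballI)
    fix u w assume "u \<in> ?C" "w \<in> ?C"
    then have "(r, u) \<in> reach ?FC" "(r, w) \<in> reach ?FC" using rr by auto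
    then have "(u, r) \<in> reach ?FC" "(r, w) \<in> reach ?FC" using reach_sym by auto
    then show "(u, w) \<in> reach ?FC" by (rule reach_trans)
  qed
qed

lemma adj_mono: "adj G a b \<Longrightarrow> G \<subseteq> F \<Longrightarrow> adj F a b"
  unfolding adj_def by auto

lemma bridge:
  assumes "is_subtree (W, F) V E" "{x, v} \<in> F" "x \<noteq> v"
  shows "(x, v) \<notin> reach (F - {{x, v}})"
proof
  let ?G = "F - {{x, v}}"
  assume "(x, v) \<in> reach ?G"
  then have "(adj ?G)\<^sup>*\<^sup>* x v"
    using rtranclp_rtrancl_eq[of "adj ?G" x v] unfolding reach_def by simp
  then obtain xs where "rtrancl_path (adj ?G) x xs v" by (auto simp: rtranclp_eq_rtrancl_path)
  then obtain ys where p: "rtrancl_path (adj ?G) x ys v" and d: "distinct (x # ys)"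
    by (rule rtrancl_path_distinct)
  have ne: "ys \<noteq> []" using p assms(3) by (cases rule: rtrancl_path.cases) auto
  have n1: "length ys \<noteq> 1"
  proof
    assume "length ys = 1"
    then obtain y where ys: "ys = [y]" by (cases ys) auto
    with p have "adj ?G x y" "rtrancl_path (adj ?G) y [] v" by (auto elim: rtrancl_path.cases)
    then have "adj ?G x v" by (auto elim: rtrancl_path.cases)
    then show False by (simp add: adj_def)
  qed
  have FE: "F \<subseteq> E" using is_subtree_sub[OF assms(1)] by auto
  have "is_cycle F (x # ys)"
    unfolding is_cycle_def
  proof (intro conjI allI impI)
    have "length ys \<noteq> 0" using ne by simp
    then have "length ys \<ge> 2" using n1 by linarith
    then show "3 \<le> length (x # ys)" by simp
    show "distinct (x # ys)" by (rule d)
    fix i assume "Suc i < length (x # ys)"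
    then have "i < length ys" by simp
    from rtrancl_path_nth[OF p this] have "adj ?G ((x # ys) ! i) (ys ! i)" .
    then show "adj F ((x # ys) ! i) ((x # ys) ! Suc i)" by (auto intro: adj_mono)
  next
    have "last (x # ys) = v" using rtrancl_path_last[OF p ne] ne by simp
    then show "adj F (last (x # ys)) (hd (x # ys))" using assms(2,3)
      by (simp add: adj_def insert_commute)
  qed
  then have "is_cycle E (x # ys)" using FE by (rule cycle_mono)
  then show False using tr unfolding is_tree_def by blast
qed


lemma split_edge:
  assumes T: "is_subtree (W, F) V E" and e: "{x, v} \<in> F" "x \<noteq> v"
  obtains A B FA FB where "is_subtree (A, FA) V E" "is_subtree (B, FB) V E" "x \<in> A" "v \<in> B"
    "A \<inter> B = {}" "A \<union> B = W" "FA \<inter> FB = {}" "{x, v} \<notin> FA" "{x, v} \<notin> FB"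
    "F = insert {x, v} (FA \<union> FB)"
proof -
  define G where "G = F - {{x, v}}"
  define A where "A = {w. (x, w) \<in> reach G}"
  define B where "B = {w. (v, w) \<in> reach G}"
  define FA where "FA = {f \<in> G. f \<subseteq> A}"
  define FB where "FB = {f \<in> G. f \<subseteq> B}"
  have gF: "gwf W F" by (rule is_subtree_gwf[OF T])
  have gG: "gwf W G" using gF unfolding gwf_def G_def by simp
  have sub: "W \<subseteq> V" "F \<subseteq> E" using is_subtree_sub[OF T] by auto
  have GE: "G \<subseteq> E" using sub(2) G_def by auto
  obtain a b where ab: "{x, v} = {a, b}" "a \<in> W" "b \<in> W" using gF e(1) unfolding gwf_def by meson
  have "x \<in> {a, b}" "v \<in> {a, b}" using ab(1) by blast+
  then have xW: "x \<in> W" and vW: "v \<in> W" using ab by auto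
  have sA: "is_subtree (A, FA) V E" unfolding A_def FA_def by (rule comp_subtree[OF gG sub(1) GE xW])
  have sB: "is_subtree (B, FB) V E" unfolding B_def FB_def by (rule comp_subtree[OF gG sub(1) GE vW])
  have xA: "x \<in> A" by (simp add: A_def reach_refl)
  have vB: "v \<in> B" by (simp add: B_def reach_refl)
  have disj: "A \<inter> B = {}"
  proof (rule ccontr)
    assume "A \<inter> B \<noteq> {}"
    then obtain w where w: "(x, w) \<in> reach G" "(v, w) \<in> reach G" by (auto simp: A_def B_def)
    have "(w, v) \<in> reach G" using w(2) by (rule reach_sym)
    with w(1) have "(x, v) \<in> reach G" by (rule reach_trans)
    with bridge[OF T e] show False by (simp add: G_def)
  qed
  have AW: "A \<subseteq> W"
  proof
    fix w assume "w \<in> A" then have "(x, w) \<in> reach G" by (simp add: A_def)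
    from reach_closed[OF this xW gG] show "w \<in> W" .
  qed
  have BW: "B \<subseteq> W"
  proof
    fix w assume "w \<in> B" then have "(v, w) \<in> reach G" by (simp add: B_def)
    from reach_closed[OF this vW gG] show "w \<in> W" .
  qed
  have cov: "w \<in> A \<union> B" if "w \<in> W" for w
  proof -
    have "(x, w) \<in> reach F" using is_subtree_conn[OF T] xW that by (simp add: connected_reach)
    then have "(x, w) \<in> {(a, b). adj F a b}\<^sup>*" by (simp add: reach_def)
    then show ?thesis
    proof (induction rule: rtrancl_induct)
      case base then show ?case using xA by simp
    next
      case (step y z)
      have ayz: "adj F y z" using step(2) by simp
      show ?case
      proof (cases "{y, z} = {x, v}")
        case True
        then have "z \<in> {x, v}" by blast
        then show ?thesis using xA vB by auto
      next
        case False
        then have g: "adj G y z" using ayz by (simp add: adj_def G_def)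
        from step(3) show ?thesis
        proof
          assume "y \<in> A"
          then have "(x, z) \<in> reach G" using g by (simp add: A_def reach_step)
          then show ?thesis by (simp add: A_def)
        next
          assume "y \<in> B"
          then have "(v, z) \<in> reach G" using g by (simp add: B_def reach_step)
          then show ?thesis by (simp add: B_def)
        qed
      qed
    qed
  qed
  have edges: "f \<subseteq> A \<or> f \<subseteq> B" if fG: "f \<in> G" for f
  proof -
    obtain a b where ab: "a \<noteq> b" "f = {a, b}" "a \<in> W" "b \<in> W" using gG fG unfolding gwf_def by meson
    have g: "adj G a b" using ab fG by (simp add: adj_def)
    from cov[OF ab(3)] show ?thesis
    proof
      assume "a \<in> A"
      then have "(x, b) \<in> reach G" using g by (simp add: A_def reach_step)
      then have "b \<in> A" by (simp add: A_def)
      then show ?thesis using \<open>a \<in> A\<close> ab(2) by simp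
    next
      assume "a \<in> B"
      then have "(v, b) \<in> reach G" using g by (simp add: B_def reach_step)
      then have "b \<in> B" by (simp add: B_def)
      then show ?thesis using \<open>a \<in> B\<close> ab(2) by simp
    qed
  qed
  have FAB: "FA \<inter> FB = {}"
  proof (rule ccontr)
    assume "FA \<inter> FB \<noteq> {}"
    then obtain f where f: "f \<in> G" "f \<subseteq> A" "f \<subseteq> B" by (auto simp: FA_def FB_def)
    obtain a b where ab: "a \<noteq> b" "f = {a, b}" using gG f(1) unfolding gwf_def by meson
    then have "a \<in> A \<inter> B" using f by auto
    then show False using disj by simp
  qed
  have eA: "{x, v} \<notin> FA" "{x, v} \<notin> FB" by (simp_all add: FA_def FB_def G_def)
  have Feq: "F = insert {x, v} (FA \<union> FB)"
  proof
    show "F \<subseteq> insert {x, v} (FA \<union> FB)"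
    proof
      fix f assume "f \<in> F"
      show "f \<in> insert {x, v} (FA \<union> FB)"
      proof (cases "f = {x, v}")
        case False
        then have "f \<in> G" using \<open>f \<in> F\<close> by (simp add: G_def)
        then show ?thesis using edges[of f] by (auto simp: FA_def FB_def)
      qed simp
    qed
    show "insert {x, v} (FA \<union> FB) \<subseteq> F" using e(1) by (auto simp: FA_def FB_def G_def)
  qed
  have "A \<union> B = W" using AW BW cov by blast
  then show thesis using that[OF sA sB xA vB disj _ FAB eA Feq] by blast
qed


lemma combine2:
  assumes s1: "is_subtree (W1, F1) V E" and d: "decomp V E W2 F2 x m l S"
    and i: "W1 \<inter> W2 = {x}" and f: "F1 \<inter> F2 = {}" and y: "y \<in> W1"
  shows "decomp V E (W1 \<union> W2) (F1 \<union> F2) y (card W1 + m - 1) l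
           (S(0 := (W1 \<union> fst (S 0), F1 \<union> snd (S 0))))"
proof -
  let ?S = "S(0 := (W1 \<union> fst (S 0), F1 \<union> snd (S 0)))"
  have d1: "\<And>j. j \<le> l \<Longrightarrow> is_subtree (S j) V E \<and> fst (S j) \<subseteq> W2"
    and d2: "\<And>j. j \<in> {1..l} \<Longrightarrow> snd (S j) \<noteq> {}"
    and d3: "\<And>i j. i \<le> l \<Longrightarrow> j \<le> l \<Longrightarrow> i \<noteq> j \<Longrightarrow> snd (S i) \<inter> snd (S j) = {}"
    and d4: "(\<Union>j\<le>l. snd (S j)) = F2"
    and d5: "card (fst (S 0)) = m" "x \<in> fst (S 0)"
    and d6: "\<And>j. j \<in> {1..l} \<Longrightarrow> card (fst (S 0) \<inter> fst (S j)) = 1"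
    using d unfolding decomp_def by auto
  have sF: "snd (S j) \<subseteq> F2" if "j \<le> l" for j using d4 that by auto
  have S0: "fst (S 0) \<subseteq> W2" using d1[of 0] by simp
  have t0: "is_subtree (fst (S 0), snd (S 0)) V E" using d1[of 0] by simp
  have xW1: "x \<in> W1" using i by auto
  have new0: "is_subtree (W1 \<union> fst (S 0), F1 \<union> snd (S 0)) V E"
    by (rule sub_union[OF s1 t0 xW1 d5(2)])
  have U: "(\<Union>j\<le>l. snd (?S j)) = F1 \<union> F2"
  proof -
    have "(\<Union>j\<le>l. snd (?S j)) = F1 \<union> (\<Union>j\<le>l. snd (S j))"
    proof (rule set_eqI)
      fix f
      show "f \<in> (\<Union>j\<le>l. snd (?S j)) \<longleftrightarrow> f \<in> F1 \<union> (\<Union>j\<le>l. snd (S j))"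
      proof
        assume "f \<in> (\<Union>j\<le>l. snd (?S j))"
        then obtain j where "j \<le> l" "f \<in> snd (?S j)" by blast
        then show "f \<in> F1 \<union> (\<Union>j\<le>l. snd (S j))" by (cases "j = 0") auto
      next
        assume "f \<in> F1 \<union> (\<Union>j\<le>l. snd (S j))"
        then consider "f \<in> F1" | j where "j \<le> l" "f \<in> snd (S j)" by blast
        then show "f \<in> (\<Union>j\<le>l. snd (?S j))"
        proof cases
          case 1 then have "f \<in> snd (?S 0)" by simp
          then show ?thesis by blast
        next
          case (2 j) then have "f \<in> snd (?S j)" by (cases "j = 0") auto
          then show ?thesis using 2 by blast
        qed
      qed
    qed
    then show ?thesis using d4 by simp
  qed
  have fin1: "finite W1" by (rule is_subtree_fin[OF s1])
  have fin0: "finite (fst (S 0))" by (rule is_subtree_fin[OF t0])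
  have I0: "W1 \<inter> fst (S 0) = {x}" using S0 i d5(2) by auto
  have C: "card (W1 \<union> fst (S 0)) = card W1 + m - 1"
    using card_Un_Int[OF fin1 fin0] I0 d5(1) by simp
  have Ij: "(W1 \<union> fst (S 0)) \<inter> fst (S j) = fst (S 0) \<inter> fst (S j)" if "j \<le> l" for j
  proof -
    have "W1 \<inter> fst (S j) \<subseteq> {x}" using d1[OF that] i by auto
    then show ?thesis using d5(2) by auto
  qed
  show ?thesis
    unfolding decomp_def
  proof (intro conjI ballI allI impI)
    fix j assume "j \<le> l"
    then show "is_subtree (?S j) V E"
      using d1 new0 S0 by (cases "j = 0") auto
  next
    fix j assume "j \<le> l"
    then show "fst (?S j) \<subseteq> W1 \<union> W2"
      using d1 new0 S0 by (cases "j = 0") auto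
  next
    fix j assume "j \<in> {1..l}"
    then show "snd (?S j) \<noteq> {}" using d2 by auto
  next
    fix j assume j: "j \<in> {1..l}"
    then have "j \<noteq> 0" "j \<le> l" by auto
    then show "card (fst (?S 0) \<inter> fst (?S j)) = 1" using Ij[of j] d6[OF j] by simp
  next
    fix i j assume ij: "i \<le> l" "j \<le> l" "i \<noteq> j"
    show "snd (?S i) \<inter> snd (?S j) = {}"
    proof (cases "i = 0 \<or> j = 0")
      case True
      then show ?thesis using ij d3[OF ij] sF[of i] sF[of j] f by auto
    next
      case False
      then show ?thesis using ij d3[OF ij] by auto
    qed
  qed (use U C y in auto)
qed


lemma nbr:
  assumes "is_subtree (W, F) V E" "x \<in> W" "w \<in> W" "w \<noteq> x"
  obtains v where "adj F x v"
proof -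
  have "(x, w) \<in> {(a, b). adj F a b}\<^sup>*"
    using is_subtree_conn[OF assms(1)] assms(2,3) by (simp add: connected_reach reach_def)
  then show thesis
  proof (cases rule: converse_rtranclE)
    case base then show ?thesis using assms(4) by simp
  next
    case (step y) then show ?thesis using that by simp
  qed
qed

lemma rooted:
  "is_subtree (W, F) V E \<Longrightarrow> x \<in> W \<Longrightarrow> 1 \<le> m \<Longrightarrow> m \<le> card W \<Longrightarrow>
    \<exists>l S. decomp V E W F x m l S \<and> real l \<le> log (3/2) (real (card W))"
proof (induction "card W" arbitrary: W F x m rule: less_induct)
  case less
  note T = less.prems(1)
  have finW: "finite W" by (rule is_subtree_fin[OF T])
  have t1: "1 \<le> card W" using less.prems by linarith
  show ?case
  proof (cases "m = card W")
    case True
    let ?S = "\<lambda>j::nat. (W, F)"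
    have "decomp V E W F x m 0 ?S"
      unfolding decomp_def using T True less.prems(2) by auto
    moreover have "real 0 \<le> log (3/2) (real (card W))" using log_ge0[OF t1] by simp
    ultimately show ?thesis by blast
  next
    case False
    then have mlt: "m < card W" using less.prems by linarith
    have "\<not> W \<subseteq> {x}"
    proof
      assume "W \<subseteq> {x}"
      then have "card W \<le> card {x}" by (intro card_mono) auto
      then show False using mlt less.prems(3) by simp
    qed
    then obtain w where w: "w \<in> W" "w \<noteq> x" by blast
    obtain v where "adj F x v" using nbr[OF T less.prems(2) w] .
    then have e: "{x, v} \<in> F" "x \<noteq> v" by (auto simp: adj_def)
    have xV: "x \<in> V" using is_subtree_sub[OF T] less.prems(2) by auto
    have eE: "{x, v} \<in> E" using is_subtree_sub[OF T] e(1) by auto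
    have sE: "is_subtree ({x, v}, {{x, v}}) V E" by (rule sub_edge[OF eE e(2)])
    show ?thesis
    proof (cases "m = 1")
      case True
      let ?S = "\<lambda>j::nat. if j = 0 then ({x}, {}) else (W, F)"
      have "decomp V E W F x m 1 ?S"
        unfolding decomp_def
      proof (intro conjI ballI allI impI)
        fix j :: nat assume "j \<le> 1"
        then show "is_subtree (?S j) V E" using T sub_single[OF xV] by auto
      next
        fix j :: nat assume "j \<le> 1"
        then show "fst (?S j) \<subseteq> W" using less.prems(2) by auto
      next
        fix j :: nat assume "j \<in> {1..1}"
        then show "snd (?S j) \<noteq> {}" using e by auto
      next
        fix j :: nat assume "j \<in> {1..1}"
        then show "card (fst (?S 0) \<inter> fst (?S j)) = 1" using less.prems(2) by auto
      next
        fix i j :: nat assume "i \<le> 1" "j \<le> 1" "i \<noteq> j"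
        then show "snd (?S i) \<inter> snd (?S j) = {}" by auto
      next
        have "{..1::nat} = {0, 1}" by auto
        then show "(\<Union>j\<le>1. snd (?S j)) = F" by simp
      qed (use True in auto)
      moreover have "real 1 \<le> log (3/2) (real (card W))"
        using log_ge1[of "card W"] mlt True by simp
      ultimately show ?thesis by blast
    next
      case False
      then have m2: "2 \<le> m" using less.prems(3) by linarith
      obtain A B FA FB where sA: "is_subtree (A, FA) V E" and sB: "is_subtree (B, FB) V E"
        and xA: "x \<in> A" and vB: "v \<in> B" and dAB: "A \<inter> B = {}" and uAB: "A \<union> B = W"
        and dF: "FA \<inter> FB = {}" and eA: "{x, v} \<notin> FA" and eB: "{x, v} \<notin> FB"
        and Feq: "F = insert {x, v} (FA \<union> FB)"
        by (rule split_edge[OF T e])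
      have finA: "finite A" and finB: "finite B" using finW uAB by auto
      have cAB: "card A + card B = card W"
        using card_Un_disjoint[OF finA finB dAB] uAB by simp
      have "A \<noteq> {}" "B \<noteq> {}" using xA vB by auto
      then have a1: "1 \<le> card A" and b1: "1 \<le> card B" using finA finB
        by (simp_all add: Suc_le_eq card_gt_0_iff)
      have xnB: "x \<notin> B" and vnA: "v \<notin> A" using dAB xA vB by auto
      define B' where "B' = B \<union> {x, v}"
      define FB' where "FB' = FB \<union> {{x, v}}"
      define A' where "A' = A \<union> {x, v}"
      define FA' where "FA' = FA \<union> {{x, v}}"
      have sB': "is_subtree (B', FB') V E" unfolding B'_def FB'_def
        by (rule sub_union[OF sB sE vB]) simp
      have sA': "is_subtree (A', FA') V E" unfolding A'_def FA'_def
        by (rule sub_union[OF sA sE xA]) simp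
      have cB': "card B' = card B + 1"
      proof -
        have "B' = insert x B" using vB by (auto simp: B'_def)
        then show ?thesis using finB xnB by simp
      qed
      have cA': "card A' = card A + 1"
      proof -
        have "A' = insert v A" using xA by (auto simp: A'_def)
        then show ?thesis using finA vnA by simp
      qed
      have IAB': "A \<inter> B' = {x}" using dAB xA vnA by (auto simp: B'_def)
      have IA'B: "A' \<inter> B = {v}" using dAB vB xnB by (auto simp: A'_def)
      have FAB': "FA \<inter> FB' = {}" using dF eA by (auto simp: FB'_def)
      have FA'B: "FA' \<inter> FB = {}" using dF eB by (auto simp: FA'_def)
      have W1: "A \<union> B' = W" "B' \<union> A = W" using uAB xA vB by (auto simp: B'_def)
      have W2: "A' \<union> B = W" using uAB xA vB by (auto simp: A'_def)
      have F1: "FA \<union> FB' = F" "FB' \<union> FA = F" using Feq by (auto simp: FB'_def)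
      have F2: "FA' \<union> FB = F" using Feq by (auto simp: FA'_def)
      have IB'A: "B' \<inter> A = {x}" using IAB' by auto
      have FB'A: "FB' \<inter> FA = {}" using FAB' by auto
      show ?thesis
      proof (cases "m > card A")
        case True
        have "card B < card W" using cAB a1 by linarith
        moreover have "1 \<le> m - card A" "m - card A \<le> card B" using True less.prems(4) cAB by linarith+
        ultimately obtain l S where d: "decomp V E B FB v (m - card A) l S"
          and lb: "real l \<le> log (3/2) (real (card B))" using less.hyps[OF _ sB vB] by blast
        from combine2[OF sA' d IA'B FA'B, of x] xA
        have "decomp V E W F x (card A' + (m - card A) - 1) l
           (S(0 := (A' \<union> fst (S 0), FA' \<union> snd (S 0))))"
          unfolding W2 F2 by (auto simp: A'_def)
        moreover have "card A' + (m - card A) - 1 = m" using cA' True by simp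
        ultimately have "decomp V E W F x m l (S(0 := (A' \<union> fst (S 0), FA' \<union> snd (S 0))))"
          by simp
        moreover have "real l \<le> log (3/2) (real (card W))"
          using lb log_mono32[OF b1, of "card W"] cAB by simp
        ultimately show ?thesis by blast
      next
        case False
        then have ma: "m \<le> card A" by simp
        show ?thesis
        proof (cases "3 * card A \<le> 2 * card W")
          case True
          have "card A < card W" using cAB b1 by linarith
          moreover note less.prems(3) ma
          ultimately obtain l S where d: "decomp V E A FA x m l S"
            and lb: "real l \<le> log (3/2) (real (card A))" using less.hyps[OF _ sA xA] by blast
          have "FB' \<noteq> {}" by (simp add: FB'_def)
          from combine1[OF d sB' IAB' FAB' this]
          have "decomp V E W F x m (Suc l) (S(Suc l := (B', FB')))"
            unfolding W1 F1 .
          moreover have "real (Suc l) \<le> log (3/2) (real (card W))"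
            using lb log_step32[OF a1 True] by simp
          ultimately show ?thesis by blast
        next
          case False
          then have big: "2 * card W < 3 * card A" by simp
          have a3: "3 \<le> card A" using big mlt m2 by linarith
          have b'lt: "card B' < card W" using cB' cAB a3 by linarith
          have b'1: "1 \<le> card B'" using cB' by simp
          show ?thesis
          proof (cases "m \<le> card B + 1")
            case True
            have xB': "x \<in> B'" by (simp add: B'_def)
            have "m \<le> card B'" using True cB' by linarith
            with b'lt less.prems(3) obtain l S where d: "decomp V E B' FB' x m l S"
              and lb: "real l \<le> log (3/2) (real (card B'))" using less.hyps[OF _ sB' xB'] by blast
            have "\<not> A \<subseteq> {x}"
            proof
              assume "A \<subseteq> {x}"
              then have "card A \<le> card {x}" by (intro card_mono) auto
              then show False using a3 by simp
            qed
            then obtain w' where w': "w' \<in> A" "w' \<noteq> x" by blast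
            obtain v' where "adj FA x v'" using nbr[OF sA xA w'] .
            then have "FA \<noteq> {}" by (auto simp: adj_def)
            from combine1[OF d sA IB'A FB'A this]
            have "decomp V E W F x m (Suc l) (S(Suc l := (A, FA)))"
              unfolding W1 F1 .
            moreover have "real (Suc l) \<le> log (3/2) (real (card W))"
            proof -
              have "3 * card B' \<le> 2 * card W" using cB' cAB big mlt m2 by linarith
              then show ?thesis using lb log_step32[OF b'1, of "card W"] by simp
            qed
            ultimately show ?thesis by blast
          next
            case False
            have "card A < card W" using cAB b1 by linarith
            moreover have "1 \<le> m - card B" "m - card B \<le> card A" using False ma by linarith+
            ultimately obtain l S where d: "decomp V E A FA x (m - card B) l S"
              and lb: "real l \<le> log (3/2) (real (card A))" using less.hyps[OF _ sA xA] by blast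
            have xB': "x \<in> B'" by (simp add: B'_def)
            from combine2[OF sB' d IB'A FB'A xB']
            have "decomp V E W F x (card B' + (m - card B) - 1) l
               (S(0 := (B' \<union> fst (S 0), FB' \<union> snd (S 0))))"
              unfolding W1 F1 .
            moreover have "card B' + (m - card B) - 1 = m" using cB' False by simp
            ultimately have "decomp V E W F x m l (S(0 := (B' \<union> fst (S 0), FB' \<union> snd (S 0))))"
              by simp
            moreover have "real l \<le> log (3/2) (real (card W))"
              using lb log_mono32[OF a1, of "card W"] cAB by simp
            ultimately show ?thesis by blast
          qed
        qed
      qed
    qed
  qed
qed

end

theorem corollary3p6:
  fixes V :: "'a set" and E :: "'a set set" and m t :: nat
  assumes "is_tree V E" and "card V = t" and "1 \<le> m" and "m \<le> t"
  shows "\<exists>(l::nat) (S :: nat \<Rightarrow> 'a set \<times> 'a set set).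
           (\<forall>j\<le>l. is_subtree (S j) V E) \<and>
           (\<forall>j\<in>{1..l}. snd (S j) \<noteq> {}) \<and>
           (\<forall>i\<le>l. \<forall>j\<le>l. i \<noteq> j \<longrightarrow> snd (S i) \<inter> snd (S j) = {}) \<and>
           (\<Union>j\<le>l. snd (S j)) = E \<and>
           card (fst (S 0)) = m \<and>
           real l \<le> log (3/2) (real t) \<and>
           (\<forall>j\<in>{1..l}. card (fst (S 0) \<inter> fst (S j)) = 1)"
proof -
  have T: "is_subtree (V, E) V E" using assms(1) by (simp add: is_subtree_def)
  have "V \<noteq> {}" using assms(1) by (simp add: is_tree_def)
  then obtain x where x: "x \<in> V" by blast
  from rooted[OF assms(1) T x assms(3)] assms(2,4)
  obtain l S where d: "decomp V E V E x m l S" and lb: "real l \<le> log (3/2) (real t)" by auto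
  show ?thesis
    apply (rule exI[of _ l], rule exI[of _ S])
    using d lb unfolding decomp_def by simp
qed

end
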